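(* For each integer $a\ge 0$ let $I_a=\{1,3,5,\ldots,2a+1\}$ (so $s(I_a)=a$). For every nonnegative integer $i$ there exists a unique polynomial $P_i(t)\in\mathbb{Q}[t]$ of degree at most $i$ such that $P_i(a)=\frac{C_{a-i}(I_a)}{C_a(I_a)}$ for all integers $a\ge i$.
   Context: Partitions are drawn as Young diagrams $\mathbb{D}(\lambda)$ in English notation; $c_{i,j}$ is the cell in row $i$, column $j$. The hook length $h_\lambda(c)$ is the number of cells of $\mathbb{D}(\lambda)$ weakly right of $c$ in its row or weakly below $c$ in its column (counting $c$ once). For $\mu\subseteq\lambda$, an excited diagram of $\lambda/\mu$ is a subset of $\mathbb{D}(\lambda)$ obtained from $\mathbb{D}(\mu)$ by repeatedly replacing a cell $c_{i,j}\in D$ by $c_{i+1,j+1}$, allowed iff $c_{i+1,j+1}\in\mathbb{D}(\lambda)$ and none of $c_{i,j+1},c_{i+1,j},c_{i+1,j+1}$ lies in $D$; $\mathbb{E}(\lambda/\mu)$ is their set. A ribbon with $n$ cells is read from its lower-left to its upper-right cell, each successive cell directly right of or directly above the previous; it corresponds to the set of $i\in\{1,\ldots,n-1\}$ with cell $i$ directly below cell $i+1$. A descent set is a non-empty finite set $I$ of positive integers; $\lambda^I$ is the unique partition with $\lambda^I_1=\lambda^I_2$ such that the cells $c_{i,j}\in\mathbb{D}(\lambda^I)$ with fewer than three of $c_{i,j+1},c_{i+1,j},c_{i+1,j+1}$ in $\mathbb{D}(\lambda^I)$ form a ribbon corresponding to $I$; this ribbon is $\mathbb{D}(\lambda^I)\setminus\mathbb{D}(\mu^I)$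 for a partition $\mu^I$. Let $s(I)=\lambda^I_1-1$. Naruse-Newton coefficients: every excited diagram of $\lambda^I/\mu^I$ meets row 1 in $\{c_{1,1},\ldots,c_{1,r}\}$, $0\le r\le s$; for $0\le j\le s(I)$, $C_j(I)=\sum_D\prod_{c\in D,\,c\notin\text{row }1}h_{\lambda^I}(c)$, summed over $D\in\mathbb{E}(\lambda^I/\mu^I)$ with exactly $s-j$ cells in row 1. *)

theory Defs
  imports "HOL-Computational_Algebra.Polynomial"
begin

text \<open>Partitions are lists of positive naturals in weakly decreasing order.
  Cells are pairs (row, column), both 1-indexed (English notation).\<close>

definition is_partition :: "nat list \<Rightarrow> bool" where
  "is_partition lam \<longleftrightarrow> sorted (rev lam) \<and> 0 \<notin> set lam"

definition diagram :: "nat list \<Rightarrow> (nat \<times> nat) set" where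
  "diagram lam = {(i, j). 1 \<le> i \<and> i \<le> length lam \<and> 1 \<le> j \<and> j \<le> lam ! (i - 1)}"

definition hook :: "nat list \<Rightarrow> nat \<times> nat \<Rightarrow> nat" where
  "hook lam c = card {j. (fst c, j) \<in> diagram lam \<and> snd c \<le> j}
              + card {i. (i, snd c) \<in> diagram lam \<and> fst c < i}"

inductive_set excited :: "nat list \<Rightarrow> nat list \<Rightarrow> (nat \<times> nat) set set"
  for lam mu where
  base: "diagram mu \<in> excited lam mu"
| move: "\<lbrakk> D \<in> excited lam mu; (i, j) \<in> D; (i + 1, j + 1) \<in> diagram lam;
           (i, j + 1) \<notin> D; (i + 1, j) \<notin> D; (i + 1, j + 1) \<notin> D \<rbrakk>
         \<Longrightarrow> insert (i + 1, j + 1) (D - {(i, j)}) \<in> excited lam mu"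

text \<open>R is a ribbon (with cells listed from lower-left to upper-right, each
  next cell directly right of or directly above the previous) corresponding to
  the set I of positions i (1-indexed) with cell i directly below cell i+1.\<close>
definition ribbon_of :: "(nat \<times> nat) set \<Rightarrow> nat set \<Rightarrow> bool" where
  "ribbon_of R I \<longleftrightarrow> (\<exists>cs :: (nat \<times> nat) list. cs \<noteq> [] \<and> set cs = R \<and>
     (\<forall>k. k + 1 < length cs \<longrightarrow>
        (cs ! (k + 1) = (fst (cs ! k), snd (cs ! k) + 1) \<or>
         (fst (cs ! k) = fst (cs ! (k + 1)) + 1 \<and> snd (cs ! (k + 1)) = snd (cs ! k)))) \<and>
     I = {i. 1 \<le> i \<and> i < length cs \<and> fst (cs ! (i - 1)) = fst (cs ! i) + 1})"

definition rim :: "nat list \<Rightarrow> (nat \<times> nat) set" where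
  "rim lam = {(i, j) \<in> diagram lam.
     card ({(i, j + 1), (i + 1, j), (i + 1, j + 1)} \<inter> diagram lam) < 3}"

definition lamI :: "nat set \<Rightarrow> nat list" where
  "lamI I = (THE lam. is_partition lam \<and> 2 \<le> length lam \<and> lam ! 0 = lam ! 1
                      \<and> ribbon_of (rim lam) I)"

definition muI :: "nat set \<Rightarrow> nat list" where
  "muI I = (THE mu. is_partition mu \<and> diagram mu \<subseteq> diagram (lamI I)
                    \<and> diagram (lamI I) - diagram mu = rim (lamI I))"

definition sI :: "nat set \<Rightarrow> nat" where
  "sI I = lamI I ! 0 - 1"

definition NN_coeff :: "nat \<Rightarrow> nat set \<Rightarrow> nat" where
  "NN_coeff j I = (\<Sum>D \<in> {D \<in> excited (lamI I) (muI I).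
                         card {c \<in> D. fst c = 1} = sI I - j}.
                    \<Prod>c \<in> {c \<in> D. fst c \<noteq> 1}. hook (lamI I) c)"

definition Iodd :: "nat \<Rightarrow> nat set" where
  "Iodd a = {2 * k + 1 | k. k \<le> a}"

end

theory Submission
  imports Defs "HOL-Library.FuncSet"
begin

definition gg :: "nat \<Rightarrow> rat" where
  "gg e = 1 / ((2 * of_nat e + 1) * (2 * of_nat e + 3))"

definition Fs :: "nat \<Rightarrow> nat \<Rightarrow> (nat \<Rightarrow> nat) set" where
  "Fs i a = {f \<in> {1..i} \<rightarrow>\<^sub>E {..a}. (\<forall>j\<in>{1..i}. j \<le> f j) \<and>
              (\<forall>j. 1 \<le> j \<longrightarrow> j < i \<longrightarrow> f j \<le> f (Suc j))}"

definition Sf :: "nat \<Rightarrow> nat \<Rightarrow> rat" where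
  "Sf i a = (\<Sum>f\<in>Fs i a. \<Prod>j\<in>{1..i}. gg (f j - j))"

definition Bq :: "nat \<Rightarrow> rat \<Rightarrow> rat" where
  "Bq k x = (\<Prod>j<k. 2 * x - 2 * of_nat j + 1)"

lemma Bq_0[simp]: "Bq 0 x = 1" by (simp add: Bq_def)

lemma Bq_Suc: "Bq (Suc k) x = Bq k x * (2 * x - 2 * of_nat k + 1)"
  by (simp add: Bq_def)

lemma Bq_Suc_shift: "Bq (Suc k) x = (2 * x + 1) * Bq k (x - 1)"
  unfolding Bq_def prod.lessThan_Suc_shift
  by (simp add: algebra_simps)

lemma Bq_eigen:
  "(2 * x - 2 * of_nat m + 1) * Bq k x - (2 * x + 1) * Bq k (x - 1)
     = 2 * (of_nat k - of_nat m) * Bq k x"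
proof (cases k)
  case 0 then show ?thesis by (simp add: algebra_simps)
next
  case (Suc k')
  define y where "y = Bq k' (x - 1)"
  have e1: "Bq k x = (2 * x + 1) * y" using Suc Bq_Suc_shift y_def by simp
  have e2: "Bq k (x - 1) = y * (2 * (x - 1) - 2 * of_nat k' + 1)"
    using Suc Bq_Suc y_def by simp
  show ?thesis unfolding e1 e2 using Suc by (simp add: algebra_simps)
qed

lemma Bq_pos: "of_nat k \<le> x \<Longrightarrow> Bq k x > 0"
  unfolding Bq_def by (intro prod_pos) auto

lemma Fs_0: "Fs 0 a = {\<lambda>_. undefined}"
  by (auto simp: Fs_def PiE_def extensional_def)

lemma Sf_0[simp]: "Sf 0 a = 1"
  by (simp add: Sf_def Fs_0)

lemma Fs_empty: "a < i \<Longrightarrow> Fs i a = {}"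
proof (rule ccontr)
  assume "a < i" "Fs i a \<noteq> {}"
  then obtain f where f: "f \<in> Fs i a" by blast
  have "i \<le> f i" "f i \<le> a" using f \<open>a < i\<close> by (auto simp: Fs_def PiE_def Pi_def)
  with \<open>a < i\<close> show False by simp
qed

lemma Sf_small: "a < i \<Longrightarrow> Sf i a = 0"
  by (simp add: Sf_def Fs_empty)

lemma Fs_finite: "finite (Fs i a)"
proof -
  have "Fs i a \<subseteq> {1..i} \<rightarrow>\<^sub>E {..a}" by (auto simp: Fs_def)
  then show ?thesis by (rule finite_subset) (intro finite_PiE, auto)
qed

lemma Fs_split:
  assumes "i \<le> a"
  shows "Fs (Suc i) (Suc a) = Fs (Suc i) a \<union> (\<lambda>f. f(Suc i := Suc a)) ` Fs i (Suc a)"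
proof (intro equalityI subsetI)
  fix f assume f: "f \<in> Fs (Suc i) (Suc a)"
  show "f \<in> Fs (Suc i) a \<union> (\<lambda>f. f(Suc i := Suc a)) ` Fs i (Suc a)"
  proof (cases "f (Suc i) = Suc a")
    case True
    let ?g = "f(Suc i := undefined)"
    have "?g \<in> Fs i (Suc a)"
      using f unfolding Fs_def by (auto simp: PiE_def Pi_def extensional_def)
    moreover have "f = ?g(Suc i := Suc a)" using True by auto
    ultimately show ?thesis by blast
  next
    case False
    have "f j \<le> f (Suc i)" if "1 \<le> j" "j \<le> Suc i" for j
      using that
    proof (induction "Suc i - j" arbitrary: j)
      case 0 then show ?case by simp
    next
      case (Suc d)
      then have "f (Suc j) \<le> f (Suc i)" by simp
      moreover have "f j \<le> f (Suc j)" using f Suc.prems Suc.hyps unfolding Fs_def by auto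
      ultimately show ?case by simp
    qed
    moreover have "f (Suc i) \<le> Suc a" using f unfolding Fs_def by (auto simp: PiE_def Pi_def)
    ultimately have "f j \<le> a" if "j \<in> {1..Suc i}" for j using False that
      by (metis atLeastAtMost_iff le_SucE le_trans)
    then have "f \<in> Fs (Suc i) a" using f unfolding Fs_def by (auto simp: PiE_def Pi_def)
    then show ?thesis by blast
  qed
next
  fix f assume "f \<in> Fs (Suc i) a \<union> (\<lambda>f. f(Suc i := Suc a)) ` Fs i (Suc a)"
  then show "f \<in> Fs (Suc i) (Suc a)"
  proof
    assume "f \<in> Fs (Suc i) a"
    then show ?thesis unfolding Fs_def by (auto simp: PiE_def Pi_def)
  next
    assume "f \<in> (\<lambda>f. f(Suc i := Suc a)) ` Fs i (Suc a)"
    then obtain g where g: "g \<in> Fs i (Suc a)" and fg: "f = g(Suc i := Suc a)" by blast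
    have "g j \<le> Suc a" if "j \<in> {1..i}" for j using g that unfolding Fs_def by (auto simp: PiE_def Pi_def)
    then show ?thesis using g assms unfolding fg Fs_def
      by (auto simp: PiE_def Pi_def extensional_def le_Suc_eq)
  qed
qed

lemma Sf_rec:
  "Sf (Suc i) (Suc a) = Sf (Suc i) a + (if i \<le> a then gg (a - i) * Sf i (Suc a) else 0)"
proof (cases "i \<le> a")
  case False
  then show ?thesis by (simp add: Sf_small)
next
  case True
  let ?h = "\<lambda>f. f(Suc i := Suc a)"
  let ?F = "\<lambda>i f. \<Prod>j\<in>{1..i}. gg (f j - j)"
  have disj: "Fs (Suc i) a \<inter> ?h ` Fs i (Suc a) = {}"
    unfolding Fs_def by (auto simp: PiE_def Pi_def)
  have inj: "inj_on ?h (Fs i (Suc a))"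
  proof (rule inj_onI)
    fix f g assume "f \<in> Fs i (Suc a)" "g \<in> Fs i (Suc a)" "?h f = ?h g"
    then have fe: "f \<in> extensional {1..i}" "g \<in> extensional {1..i}" and eq: "?h f = ?h g"
      unfolding Fs_def PiE_def by auto
    show "f = g"
    proof
      fix x show "f x = g x"
      proof (cases "x = Suc i")
        case True then show ?thesis using fe by (simp add: extensional_def)
      next
        case False then show ?thesis using fun_cong[OF eq, of x] by simp
      qed
    qed
  qed
  have "Sf (Suc i) (Suc a) = (\<Sum>f\<in>Fs (Suc i) a. ?F (Suc i) f) + (\<Sum>f\<in>?h ` Fs i (Suc a). ?F (Suc i) f)"
    unfolding Sf_def Fs_split[OF True]
    by (rule sum.union_disjoint) (auto simp: Fs_finite disj)
  also have "(\<Sum>f\<in>?h ` Fs i (Suc a). ?F (Suc i) f) = (\<Sum>f\<in>Fs i (Suc a). ?F (Suc i) (?h f))"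
    by (rule sum.reindex[OF inj, unfolded comp_def])
  also have "\<dots> = (\<Sum>f\<in>Fs i (Suc a). gg (a - i) * ?F i f)"
  proof (rule sum.cong[OF refl])
    fix f
    have "?F (Suc i) (?h f) = gg (Suc a - Suc i) * (\<Prod>j\<in>{1..i}. gg (?h f j - j))"
      by (simp add: prod.nat_ivl_Suc' mult.commute)
    also have "(\<Prod>j\<in>{1..i}. gg (?h f j - j)) = ?F i f" by (intro prod.cong) auto
    finally show "?F (Suc i) (?h f) = gg (a - i) * ?F i f" by simp
  qed
  finally show ?thesis using True by (simp add: Sf_def sum_distrib_left)
qed

lemma Sf_Suc_zero: "Sf (Suc i) 0 = 0" by (simp add: Sf_small)

lemma gg_Bq:
  assumes "i \<le> a"
  shows "Bq (Suc (Suc i)) (of_nat (Suc a)) * gg (a - i) = Bq i (of_nat (Suc a))"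
proof -
  have e: "of_nat (a - i) = (of_nat a - of_nat i :: rat)" using assms by (simp add: of_nat_diff)
  have p1: "2 * of_nat (a - i) + 1 \<noteq> (0::rat)" "2 * of_nat (a - i) + 3 \<noteq> (0::rat)"
    using of_nat_0_le_iff[of "a - i", where 'a=rat] by linarith+
  have f1: "2 * of_nat (Suc a) - 2 * of_nat i + 1 = 2 * of_nat (a - i) + (3::rat)"
    using e by simp
  have f2: "2 * of_nat (Suc a) - 2 * of_nat (Suc i) + 1 = 2 * of_nat (a - i) + (1::rat)"
    using e by simp
  define u where "u = 2 * of_nat (a - i) + (1::rat)"
  have u0: "u > 0" unfolding u_def using of_nat_0_le_iff[of "a - i", where 'a=rat] by linarith
  have u2: "2 * of_nat (a - i) + (3::rat) = u + 2" unfolding u_def by simp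
  have gu: "gg (a - i) = 1 / (u * (u + 2))" unfolding gg_def u2 u_def by simp
  have "Bq (Suc (Suc i)) (of_nat (Suc a)) = Bq i (of_nat (Suc a)) * (u + 2) * u"
    unfolding Bq_Suc f1 f2 u2 u_def by simp
  moreover have nz: "u * (u + 2) \<noteq> 0" using u0 by simp
  moreover have "(u + 2) * u = u * (u + 2)" by simp
  ultimately show ?thesis unfolding gu by (simp add: field_simps)
qed

lemma T_exists:
  "\<exists>q::nat \<Rightarrow> rat. \<forall>a. (i = 0 \<or> i \<le> Suc a) \<longrightarrow>
      Bq i (of_nat a) * Sf i a = (\<Sum>k\<le>i. q k * Bq k (of_nat a))"
proof (induction i)
  case 0
  show ?case by (rule exI[of _ "\<lambda>_. 1"]) simp
next
  case (Suc i)
  then obtain q where q: "\<And>a. i = 0 \<or> i \<le> Suc a \<Longrightarrow>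
      Bq i (of_nat a) * Sf i a = (\<Sum>k\<le>i. q k * Bq k (of_nat a))" by blast
  define q0 where "q0 k = q k / (2 * (of_nat k - of_nat (Suc i)))" for k
  define c where "c = - (\<Sum>k\<le>i. q0 k * Bq k (of_nat i)) / Bq (Suc i) (of_nat i)"
  define q' where "q' k = (if k \<le> i then q0 k else c)" for k
  define V where "V x = (\<Sum>k\<le>Suc i. q' k * Bq k x)" for x
  have Bpos: "Bq (Suc i) (of_nat i) \<noteq> 0"
  proof -
    have "Bq (Suc i) (of_nat i) = Bq i (of_nat i) * (2 * of_nat i - 2 * of_nat i + 1)"
      by (rule Bq_Suc)
    moreover have "Bq i (of_nat i) > 0" by (rule Bq_pos) simp
    ultimately show ?thesis by simp
  qed
  have V_base: "V (of_nat i) = 0"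
    unfolding V_def using Bpos by (simp add: q'_def c_def)
  have V_rec: "(2 * x - 2 * of_nat (Suc i) + 1) * V x - (2 * x + 1) * V (x - 1)
       = (\<Sum>k\<le>i. q k * Bq k x)" for x
  proof -
    have "(2 * x - 2 * of_nat (Suc i) + 1) * V x - (2 * x + 1) * V (x - 1)
      = (\<Sum>k\<le>Suc i. q' k * ((2 * x - 2 * of_nat (Suc i) + 1) * Bq k x - (2 * x + 1) * Bq k (x - 1)))"
      unfolding V_def by (simp add: sum_distrib_left sum_subtractf[symmetric] algebra_simps)
    also have "\<dots> = (\<Sum>k\<le>Suc i. q' k * (2 * (of_nat k - of_nat (Suc i)) * Bq k x))"
      by (simp only: Bq_eigen)
    also have "\<dots> = (\<Sum>k\<le>i. q' k * (2 * (of_nat k - of_nat (Suc i)) * Bq k x))"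
      by simp
    also have "\<dots> = (\<Sum>k\<le>i. q k * Bq k x)"
    proof (rule sum.cong[OF refl])
      fix k assume "k \<in> {..i}"
      then have "(of_nat k - of_nat (Suc i) :: rat) \<noteq> 0" by simp
      then show "q' k * (2 * (of_nat k - of_nat (Suc i)) * Bq k x) = q k * Bq k x"
        using \<open>k \<in> {..i}\<close> by (simp add: q'_def q0_def field_simps)
    qed
    finally show ?thesis .
  qed
  have main: "Bq (Suc i) (of_nat (i + d)) * Sf (Suc i) (i + d) = V (of_nat (i + d))" for d
  proof (induction d)
    case 0
    then show ?case using V_base by (simp add: Sf_small)
  next
    case (Suc d)
    define a where "a = i + d"
    define x where "x = (of_nat (Suc a) :: rat)"
    have ia: "i \<le> a" by (simp add: a_def)
    have IH: "Bq (Suc i) (x - 1) * Sf (Suc i) a = V (x - 1)"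
      using Suc.IH by (simp add: x_def a_def)
    have qa: "Bq i x * Sf i (Suc a) = (\<Sum>k\<le>i. q k * Bq k x)"
      using q[of "Suc a"] ia by (simp add: x_def)
    have pos: "2 * x - 2 * of_nat (Suc i) + 1 > 0" using ia by (simp add: x_def)
    have "(2 * x - 2 * of_nat (Suc i) + 1) * (Bq (Suc i) x * Sf (Suc i) (Suc a))
        = Bq (Suc (Suc i)) x * Sf (Suc i) (Suc a)"
      by (simp add: Bq_Suc algebra_simps)
    also have "\<dots> = Bq (Suc (Suc i)) x * Sf (Suc i) a + (Bq (Suc (Suc i)) x * gg (a - i)) * Sf i (Suc a)"
      using ia by (simp add: Sf_rec algebra_simps)
    also have "\<dots> = (2 * x + 1) * (Bq (Suc i) (x - 1) * Sf (Suc i) a) + Bq i x * Sf i (Suc a)"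
      using gg_Bq[OF ia] by (simp add: x_def Bq_Suc_shift[of "Suc i"] algebra_simps)
    also have "\<dots> = (2 * x - 2 * of_nat (Suc i) + 1) * V x"
      using IH qa V_rec[of x] by (simp add: algebra_simps)
    finally have "Bq (Suc i) x * Sf (Suc i) (Suc a) = V x" using pos by simp
    then show ?case by (simp add: x_def a_def)
  qed
  show ?case
  proof (rule exI[of _ q'], intro allI impI)
    fix a assume "Suc i = 0 \<or> Suc i \<le> Suc a"
    then have "a = i + (a - i)" by simp
    then show "Bq (Suc i) (of_nat a) * Sf (Suc i) a = (\<Sum>k\<le>Suc i. q' k * Bq k (of_nat a))"
      using main[of "a - i"] by (simp add: V_def)
  qed
qed


definition lamA :: "nat \<Rightarrow> nat list" where
  "lamA a = (a + 1) # map (\<lambda>k. a + 1 - k) [0..<a + 1]"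

definition muA :: "nat \<Rightarrow> nat list" where
  "muA a = map (\<lambda>k. a - k) [0..<a]"

definition Lam :: "nat \<Rightarrow> (nat \<times> nat) set" where
  "Lam a = {(i, j). (i = 1 \<and> 1 \<le> j \<and> j \<le> a + 1) \<or> (2 \<le> i \<and> 1 \<le> j \<and> i + j \<le> a + 3)}"

definition Del :: "nat \<Rightarrow> (nat \<times> nat) set" where
  "Del a = {(i, j). 1 \<le> i \<and> 1 \<le> j \<and> i + j \<le> a + 1}"

lemma length_lamA[simp]: "length (lamA a) = a + 2" by (simp add: lamA_def)

lemma nth_lamA: "k < a + 2 \<Longrightarrow> lamA a ! k = (if k = 0 then a + 1 else a + 2 - k)"
  by (cases k) (auto simp: lamA_def nth_Cons' simp del: upt_Suc)

lemma diagram_lamA: "diagram (lamA a) = Lam a"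
proof -
  have "(i, j) \<in> diagram (lamA a) \<longleftrightarrow> (i, j) \<in> Lam a" for i j
  proof (cases "i \<le> 1")
    case True then show ?thesis by (auto simp: diagram_def Lam_def nth_lamA)
  next
    case False
    then have "i - 1 \<noteq> 0" by simp
    then show ?thesis using False by (auto simp: diagram_def Lam_def nth_lamA)
  qed
  then show ?thesis by auto
qed

lemma diagram_muA: "diagram (muA a) = Del a"
  by (auto simp: diagram_def Del_def muA_def)

lemma diagram_inj:
  assumes "0 \<notin> set l1" "0 \<notin> set l2" "diagram l1 = diagram l2"
  shows "l1 = l2"
proof -
  have mem: "(i, 1) \<in> diagram l \<longleftrightarrow> 1 \<le> i \<and> i \<le> length l" if "0 \<notin> set l" for l i
  proof -
    have "i - 1 < length l \<Longrightarrow> 1 \<le> l ! (i - 1)" using that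
      by (metis less_one not_less nth_mem)
    then show ?thesis by (auto simp: diagram_def)
  qed
  have le: "length l \<le> length l'" if "0 \<notin> set l" "0 \<notin> set l'" "diagram l = diagram l'" for l l'
  proof (cases "l = []")
    case True then show ?thesis by simp
  next
    case False
    then have "(length l, 1) \<in> diagram l" using mem[OF that(1)] by (simp add: Suc_leI)
    then have "(length l, 1) \<in> diagram l'" using that(3) by simp
    then show ?thesis using mem[OF that(2)] by simp
  qed
  have len: "length l1 = length l2"
    using le[OF assms] le[OF assms(2,1) assms(3)[symmetric]] by simp
  show ?thesis
  proof (rule nth_equalityI[OF len])
    fix k assume k: "k < length l1"
    have "(Suc k, j) \<in> diagram l1 \<longleftrightarrow> (Suc k, j) \<in> diagram l2" for j using assms(3) by simp
    then have "\<forall>j. (1 \<le> j \<and> j \<le> l1 ! k) \<longleftrightarrow> (1 \<le> j \<and> j \<le> l2 ! k)"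
      using k len by (auto simp: diagram_def)
    then have "l1 ! k \<le> l2 ! k" "l2 ! k \<le> l1 ! k"
      using k len assms(1,2) by (metis nth_mem le_refl less_one not_less)+
    then show "l1 ! k = l2 ! k" by simp
  qed
qed

lemma hook_lamA:
  assumes "2 \<le> i" "1 \<le> j" "i + j \<le> a + 3"
  shows "hook (lamA a) (i, j) = 2 * (a + 3 - i - j) + 1"
proof -
  have "{j'. (i, j') \<in> diagram (lamA a) \<and> j \<le> j'} = {j..a + 3 - i}"
    using assms by (auto simp: diagram_lamA Lam_def)
  moreover have "{i'. (i', j) \<in> diagram (lamA a) \<and> i < i'} = {i<..a + 3 - j}"
    using assms by (auto simp: diagram_lamA Lam_def)
  ultimately show ?thesis using assms by (simp add: hook_def)
qed


lemma card3_lt_iff: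
  assumes "x \<noteq> y" "x \<noteq> z" "y \<noteq> z"
  shows "card ({x, y, z} \<inter> S) < 3 \<longleftrightarrow> \<not> (x \<in> S \<and> y \<in> S \<and> z \<in> S)"
proof
  assume "card ({x, y, z} \<inter> S) < 3"
  then show "\<not> (x \<in> S \<and> y \<in> S \<and> z \<in> S)"
  proof (rule contrapos_pn)
    assume "x \<in> S \<and> y \<in> S \<and> z \<in> S"
    then have "{x, y, z} \<inter> S = {x, y, z}" by auto
    then show "\<not> card ({x, y, z} \<inter> S) < 3" using assms by simp
  qed
next
  assume "\<not> (x \<in> S \<and> y \<in> S \<and> z \<in> S)"
  then have "{x, y, z} \<inter> S \<subset> {x, y, z}" by auto
  then have "card ({x, y, z} \<inter> S) < card {x, y, z}" using psubset_card_mono[of "{x, y, z}"] by simp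
  moreover have "card {x, y, z} \<le> 3" by (simp add: card_insert_if)
  ultimately show "card ({x, y, z} \<inter> S) < 3" by simp
qed

lemma rim_iff: "(i, j) \<in> rim lam \<longleftrightarrow> (i, j) \<in> diagram lam \<and>
    \<not> ((i, j + 1) \<in> diagram lam \<and> (i + 1, j) \<in> diagram lam \<and> (i + 1, j + 1) \<in> diagram lam)"
  unfolding rim_def by (subst card3_lt_iff) auto

definition RimA :: "nat \<Rightarrow> (nat \<times> nat) set" where
  "RimA a = {(i, j). (i = 1 \<and> j = a + 1) \<or> (2 \<le> i \<and> 1 \<le> j \<and> a + 2 \<le> i + j \<and> i + j \<le> a + 3)}"

lemma rim_lamA: "rim (lamA a) = RimA a"
proof -
  have "(i, j) \<in> rim (lamA a) \<longleftrightarrow> (i, j) \<in> RimA a" for i j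
    unfolding rim_iff diagram_lamA by (auto simp: Lam_def RimA_def)
  then show ?thesis by auto
qed

definition csA :: "nat \<Rightarrow> (nat \<times> nat) list" where
  "csA a = map (\<lambda>k. (a + 2 - (k + 1) div 2, 1 + k div 2)) [0..<2 * a + 2]"

lemma nth_csA: "k < 2 * a + 2 \<Longrightarrow> csA a ! k = (a + 2 - (k + 1) div 2, 1 + k div 2)"
  by (simp add: csA_def del: upt_Suc)

lemma length_csA[simp]: "length (csA a) = 2 * a + 2" by (simp add: csA_def)

lemma set_csA: "set (csA a) = RimA a"
proof (intro equalityI subsetI)
  fix c assume "c \<in> set (csA a)"
  then obtain k where k: "k < 2 * a + 2" "c = (a + 2 - (k + 1) div 2, 1 + k div 2)"
    by (auto simp: csA_def simp del: upt_Suc)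
  show "c \<in> RimA a"
  proof (cases "even k")
    case True
    then obtain m where m: "k = 2 * m" by blast
    then have "c = (a + 2 - m, 1 + m)" "m \<le> a" using k by auto
    then show ?thesis by (auto simp: RimA_def)
  next
    case False
    then obtain m where m: "k = 2 * m + 1" using oddE by blast
    then have "c = (a + 1 - m, 1 + m)" "m \<le> a" using k by auto
    then show ?thesis by (cases "m = a") (auto simp: RimA_def)
  qed
next
  fix c assume c: "c \<in> RimA a"
  obtain i j where ij: "c = (i, j)" by fastforce
  have mem: "(a + 2 - (k + 1) div 2, 1 + k div 2) \<in> set (csA a)" if "k < 2 * a + 2" for k
    using that by (auto simp: csA_def simp del: upt_Suc)
  show "c \<in> set (csA a)"
  proof (cases "i + j = a + 3")
    case True
    then have j: "1 \<le> j" "j \<le> a + 1" "i = a + 3 - j" using c ij by (auto simp: RimA_def)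
    have "(2 * (j - 1) + 1) div 2 = j - 1" "2 * (j - 1) div 2 = j - 1" by presburger+
    then show ?thesis using mem[of "2 * (j - 1)"] j ij by (simp add: numeral_3_eq_3)
  next
    case False
    then have j: "1 \<le> j" "j \<le> a + 1" "i = a + 2 - j" using c ij by (auto simp: RimA_def)
    have "(2 * j - 1 + 1) div 2 = j" "(2 * j - 1) div 2 = j - 1" using j by presburger+
    then show ?thesis using mem[of "2 * j - 1"] j ij by (simp add: numeral_2_eq_2)
  qed
qed

lemma ribbon_lamA: "ribbon_of (rim (lamA a)) (Iodd a)"
  unfolding ribbon_of_def rim_lamA
proof (intro exI[of _ "csA a"] conjI allI impI)
  show "csA a \<noteq> []" by (simp add: csA_def)
  show "set (csA a) = RimA a" by (rule set_csA)
next
  fix k assume k: "k + 1 < length (csA a)"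
  then have k': "k + 1 < 2 * a + 2" by (simp add: csA_def)
  have e1: "csA a ! k = (a + 2 - (k + 1) div 2, 1 + k div 2)" using k' by (simp add: csA_def del: upt_Suc)
  have e2: "csA a ! (k + 1) = (a + 2 - (k + 2) div 2, 1 + (k + 1) div 2)" using k' by (simp add: csA_def del: upt_Suc)
  show "csA a ! (k + 1) = (fst (csA a ! k), snd (csA a ! k) + 1) \<or>
        fst (csA a ! k) = fst (csA a ! (k + 1)) + 1 \<and> snd (csA a ! (k + 1)) = snd (csA a ! k)"
  proof (cases "even k")
    case True
    then have "(k + 2) div 2 = k div 2 + 1" "(k + 1) div 2 = k div 2" by presburger+
    moreover have "k div 2 + 1 \<le> a + 1" using k' by presburger
    ultimately show ?thesis unfolding e1 e2 by simp
  next
    case False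
    then have "(k + 2) div 2 = (k + 1) div 2" "(k + 1) div 2 = k div 2 + 1" by presburger+
    then show ?thesis unfolding e1 e2 by simp
  qed
next
  show "Iodd a = {i. 1 \<le> i \<and> i < length (csA a) \<and> fst (csA a ! (i - 1)) = fst (csA a ! i) + 1}"
  proof (intro equalityI subsetI)
    fix i assume "i \<in> Iodd a"
    then obtain m where m: "i = 2 * m + 1" "m \<le> a" by (auto simp: Iodd_def)
    have "csA a ! (i - 1) = (a + 2 - m, 1 + m)" "csA a ! i = (a + 1 - m, 1 + m)"
      using m by (simp_all add: csA_def del: upt_Suc)
    then show "i \<in> {i. 1 \<le> i \<and> i < length (csA a) \<and> fst (csA a ! (i - 1)) = fst (csA a ! i) + 1}"
      using m by (simp add: csA_def)
  next
    fix i assume "i \<in> {i. 1 \<le> i \<and> i < length (csA a) \<and> fst (csA a ! (i - 1)) = fst (csA a ! i) + 1}"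
    then have i: "1 \<le> i" "i < 2 * a + 2" "fst (csA a ! (i - 1)) = fst (csA a ! i) + 1"
      by (auto simp: csA_def simp del: upt_Suc)
    moreover have "csA a ! (i - 1) = (a + 2 - i div 2, 1 + (i - 1) div 2)"
      using nth_csA[of "i - 1" a] i by simp
    ultimately have "a + 2 - i div 2 = a + 2 - (i + 1) div 2 + 1"
      using nth_csA[of i a] by simp
    then have "odd i" using i by presburger
    then obtain m where "i = 2 * m + 1" by (metis oddE)
    then show "i \<in> Iodd a" using i by (auto simp: Iodd_def)
  qed
qed

lemma partition_lamA: "is_partition (lamA a)"
  unfolding is_partition_def sorted_rev_iff_nth_mono
  by (auto simp: nth_lamA in_set_conv_nth)


lemma diagram_iff: "(i, j) \<in> diagram lam \<longleftrightarrow> 1 \<le> i \<and> i \<le> length lam \<and> 1 \<le> j \<and> j \<le> lam ! (i - 1)"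
  by (simp add: diagram_def)

lemma rim_sub: "rim lam \<subseteq> diagram lam" by (auto simp: rim_def)

lemma rowend_rim:
  assumes "0 \<notin> set lam" "1 \<le> r" "r \<le> length lam"
  shows "(r, lam ! (r - 1)) \<in> rim lam"
proof -
  have "lam ! (r - 1) \<noteq> 0" using assms by (metis One_nat_def Suc_le_eq Suc_pred nth_mem less_Suc_eq_le)
  then show ?thesis using assms unfolding rim_iff diagram_iff by auto
qed

lemma corner_rim:
  assumes "0 \<notin> set lam" "lam \<noteq> []"
  shows "(length lam, 1) \<in> rim lam"
proof -
  have "lam ! (length lam - 1) \<noteq> 0" using assms by (metis diff_less length_greater_0_conv nth_mem zero_less_one)
  then show ?thesis using assms unfolding rim_iff diagram_iff by (auto simp: Suc_le_eq)
qed

lemma Iodd_iff: "Suc k \<in> Iodd a \<longleftrightarrow> even k \<and> k \<le> 2 * a"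
proof
  assume "Suc k \<in> Iodd a"
  then obtain m where "Suc k = 2 * m + 1" "m \<le> a" by (auto simp: Iodd_def)
  then show "even k \<and> k \<le> 2 * a" by simp
next
  assume "even k \<and> k \<le> 2 * a"
  then obtain m where "k = 2 * m" "m \<le> a" by auto
  then show "Suc k \<in> Iodd a" by (auto simp: Iodd_def)
qed

lemma lam_unique:
  assumes part: "is_partition lam" and len2: "2 \<le> length lam" and eq01: "lam ! 0 = lam ! 1"
    and rib: "ribbon_of (rim lam) (Iodd a)"
  shows "lam = lamA a"
proof -
  obtain cs where cs_ne: "cs \<noteq> []" and cs_set: "set cs = rim lam"
    and steps: "\<And>k. k + 1 < length cs \<Longrightarrow>
        (cs ! (k + 1) = (fst (cs ! k), snd (cs ! k) + 1) \<or>
         (fst (cs ! k) = fst (cs ! (k + 1)) + 1 \<and> snd (cs ! (k + 1)) = snd (cs ! k)))"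
    and Ieq: "Iodd a = {i. 1 \<le> i \<and> i < length cs \<and> fst (cs ! (i - 1)) = fst (cs ! i) + 1}"
    using rib unfolding ribbon_of_def by blast
  define n where "n = length cs"
  define l where "l = length lam"
  have z: "0 \<notin> set lam" using part by (simp add: is_partition_def)
  define u where "u k = min ((k + 1) div 2) (a + 1)" for k
  have upI: "fst (cs ! k) = fst (cs ! (k + 1)) + 1 \<longleftrightarrow> even k \<and> k \<le> 2 * a" if "k + 1 < n" for k
  proof -
    have "Suc k \<in> Iodd a \<longleftrightarrow> fst (cs ! k) = fst (cs ! (k + 1)) + 1"
      using that unfolding Ieq n_def by simp
    then show ?thesis using Iodd_iff by simp
  qed
  have u_up: "u (k + 1) = u k + 1" if "even k \<and> k \<le> 2 * a" for k
    using that unfolding u_def by presburger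
  have u_same: "u (k + 1) = u k" if "\<not> (even k \<and> k \<le> 2 * a)" for k
    using that unfolding u_def by presburger
  have pos: "fst (cs ! k) + u k = fst (cs ! 0) \<and> snd (cs ! k) + u k = snd (cs ! 0) + k" if "k < n" for k
    using that
  proof (induction k)
    case 0 then show ?case by (simp add: u_def)
  next
    case (Suc k)
    then have IH: "fst (cs ! k) + u k = fst (cs ! 0) \<and> snd (cs ! k) + u k = snd (cs ! 0) + k" by simp
    have kn: "k + 1 < length cs" using Suc.prems n_def by simp
    from steps[OF kn] show ?case
    proof
      assume r: "cs ! (k + 1) = (fst (cs ! k), snd (cs ! k) + 1)"
      then have "\<not> (even k \<and> k \<le> 2 * a)" using upI[of k] kn n_def by auto
      then show ?thesis using u_same[of k] IH r by simp
    next
      assume up: "fst (cs ! k) = fst (cs ! (k + 1)) + 1 \<and> snd (cs ! (k + 1)) = snd (cs ! k)"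
      then have "even k \<and> k \<le> 2 * a" using upI[of k] kn n_def by auto
      then show ?thesis using u_up[of k] IH up by simp
    qed
  qed
  have big: "2 * a + 1 < n"
  proof -
    have "2 * a + 1 \<in> Iodd a" by (auto simp: Iodd_def)
    then show ?thesis unfolding Ieq n_def by simp
  qed
  have indiag: "cs ! k \<in> diagram lam" if "k < n" for k
    using that cs_set rim_sub n_def nth_mem by blast
  have inrim: "\<exists>k<n. cs ! k = c" if "c \<in> rim lam" for c
    using that cs_set n_def by (metis in_set_conv_nth)
  have lne: "lam \<noteq> []" using len2 by auto
  obtain k0 where k0: "k0 < n" "cs ! k0 = (l, 1)"
    using inrim[OF corner_rim[OF z lne]] l_def by blast
  have n0: "0 < n" using big by simp
  have c0d: "1 \<le> fst (cs ! 0) \<and> fst (cs ! 0) \<le> l \<and> 1 \<le> snd (cs ! 0)"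
    using indiag[OF n0] unfolding l_def
    by (metis diagram_iff prod.collapse)
  have r0: "fst (cs ! 0) = l" and c0: "snd (cs ! 0) = 1"
    using pos[OF k0(1)] k0(2) c0d by (auto simp: u_def)
  have posk: "fst (cs ! k) + u k = l" "snd (cs ! k) + u k = 1 + k" if "k < n" for k
    using pos[OF that] r0 c0 by auto
  have la: "a + 2 \<le> l"
  proof -
    have "1 \<le> fst (cs ! (2 * a + 1))" using indiag[OF big]
      by (metis diagram_iff prod.collapse)
    moreover have "u (2 * a + 1) = a + 1" unfolding u_def by simp
    ultimately show ?thesis using posk(1)[OF big] by simp
  qed
  have "(1, lam ! 0) \<in> rim lam" using rowend_rim[OF z, of 1] lne by (simp add: Suc_le_eq)
  then obtain k1 where k1: "k1 < n" "cs ! k1 = (1, lam ! 0)"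
    using inrim by blast
  have uk1: "u k1 \<le> a + 1" unfolding u_def by simp
  have "1 + u k1 = l" using posk(1)[OF k1(1)] k1(2) by simp
  then have l_eq: "l = a + 2" and uk1': "u k1 = a + 1" using la uk1 by auto
  have "2 * a + 1 \<le> k1" using uk1' unfolding u_def by presburger
  moreover have "lam ! 0 + u k1 = 1 + k1" using posk(2)[OF k1(1)] k1(2) by simp
  ultimately have L0: "a + 1 \<le> lam ! 0" using uk1' by simp
  have "(2, lam ! 1) \<in> rim lam" using rowend_rim[OF z, of 2] len2 by simp
  then obtain k2 where k2: "k2 < n" "cs ! k2 = (2, lam ! 1)"
    using inrim by blast
  have "2 + u k2 = a + 2" using posk(1)[OF k2(1)] k2(2) l_eq by simp
  then have "u k2 = a" by simp
  then have "k2 \<le> 2 * a" unfolding u_def by presburger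
  moreover have "lam ! 1 + u k2 = 1 + k2" using posk(2)[OF k2(1)] k2(2) by simp
  ultimately have "lam ! 1 \<le> a + 1" using \<open>u k2 = a\<close> by simp
  then have L0': "lam ! 0 = a + 1" using L0 eq01 by simp
  have Lr: "lam ! (r - 1) = a + 3 - r" if r: "2 \<le> r" "r \<le> a + 2" for r
  proof -
    have "(r, lam ! (r - 1)) \<in> rim lam" using rowend_rim[OF z, of r] r l_eq l_def by simp
    then obtain kr where kr: "kr < n" "cs ! kr = (r, lam ! (r - 1))"
      using inrim by blast
    have "r + u kr = a + 2" using posk(1)[OF kr(1)] kr(2) l_eq by simp
    then have ukr: "u kr = a + 2 - r" by simp
    then have "kr \<le> 2 * (a + 2 - r)" using r unfolding u_def by presburger
    moreover have "lam ! (r - 1) + u kr = 1 + kr" using posk(2)[OF kr(1)] kr(2) by simp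
    ultimately have up: "lam ! (r - 1) \<le> a + 3 - r" using ukr r by simp
    define m where "m = a + 2 - r"
    have mn: "2 * m < n" using big r m_def by simp
    have um: "u (2 * m) = m" unfolding u_def m_def using r by simp
    have "fst (cs ! (2 * m)) + m = a + 2" "snd (cs ! (2 * m)) + m = 1 + 2 * m"
      using posk[OF mn] um l_eq by simp_all
    then have "fst (cs ! (2 * m)) = r" "snd (cs ! (2 * m)) = a + 3 - r"
      using r unfolding m_def by linarith+
    then have "a + 3 - r \<le> lam ! (r - 1)" using indiag[OF mn]
      by (metis diagram_iff prod.collapse)
    then show ?thesis using up by simp
  qed
  show ?thesis
  proof (rule nth_equalityI)
    show "length lam = length (lamA a)" using l_eq l_def by simp
  next
    fix k assume "k < length lam"
    then have k: "k < a + 2" using l_eq l_def by simp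
    show "lam ! k = lamA a ! k"
    proof (cases k)
      case 0 then show ?thesis using L0' nth_lamA[OF k] by simp
    next
      case (Suc k')
      then show ?thesis using Lr[of "k + 1"] k nth_lamA[OF k] by simp
    qed
  qed
qed

lemma lamI_Iodd: "lamI (Iodd a) = lamA a"
  unfolding lamI_def
proof (rule the_equality)
  show "is_partition (lamA a) \<and> 2 \<le> length (lamA a) \<and> lamA a ! 0 = lamA a ! 1 \<and>
        ribbon_of (rim (lamA a)) (Iodd a)"
    using partition_lamA ribbon_lamA by (simp add: nth_lamA)
next
  fix lam assume "is_partition lam \<and> 2 \<le> length lam \<and> lam ! 0 = lam ! 1 \<and> ribbon_of (rim lam) (Iodd a)"
  then show "lam = lamA a" using lam_unique by blast
qed

lemma sI_Iodd: "sI (Iodd a) = a"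
  by (simp add: sI_def lamI_Iodd nth_lamA)

lemma partition_muA: "is_partition (muA a)"
  unfolding is_partition_def sorted_rev_iff_nth_mono
  by (auto simp: muA_def in_set_conv_nth)

lemma Lam_minus_Rim: "Lam a - RimA a = Del a"
  by (auto simp: Lam_def RimA_def Del_def)

lemma muI_Iodd: "muI (Iodd a) = muA a"
  unfolding muI_def lamI_Iodd
proof (rule the_equality)
  show "is_partition (muA a) \<and> diagram (muA a) \<subseteq> diagram (lamA a) \<and>
        diagram (lamA a) - diagram (muA a) = rim (lamA a)"
    using partition_muA unfolding diagram_muA diagram_lamA rim_lamA
    by (auto simp: Lam_def RimA_def Del_def)
next
  fix mu assume mu: "is_partition mu \<and> diagram mu \<subseteq> diagram (lamA a) \<and>
        diagram (lamA a) - diagram mu = rim (lamA a)"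
  then have "diagram mu = diagram (muA a)"
    unfolding diagram_muA diagram_lamA rim_lamA
    by (metis Diff_Diff_Int Lam_minus_Rim inf.absorb_iff2)
  then show "mu = muA a" using diagram_inj mu partition_muA by (auto simp: is_partition_def)
qed


definition sh :: "nat \<times> nat \<Rightarrow> nat \<times> nat" where
  "sh c = (fst c + 1, snd c + 1)"

definition Up :: "nat \<Rightarrow> (nat \<times> nat) set \<Rightarrow> bool" where
  "Up a M \<longleftrightarrow> M \<subseteq> Del a \<and> (\<forall>i j. (i, j) \<in> M \<longrightarrow> (i + 1, j) \<in> Del a \<longrightarrow> (i + 1, j) \<in> M)
      \<and> (\<forall>i j. (i, j) \<in> M \<longrightarrow> (i, j + 1) \<in> Del a \<longrightarrow> (i, j + 1) \<in> M)"

definition Dm :: "nat \<Rightarrow> (nat \<times> nat) set \<Rightarrow> (nat \<times> nat) set" where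
  "Dm a M = (Del a - M) \<union> sh ` M"

lemma sh_simp[simp]: "sh (i, j) = (i + 1, j + 1)" by (simp add: sh_def)

lemma sh_mem_iff: "(i, j) \<in> sh ` M \<longleftrightarrow> 1 \<le> i \<and> 1 \<le> j \<and> (i - 1, j - 1) \<in> M"
proof
  assume "(i, j) \<in> sh ` M"
  then obtain p q where "(p, q) \<in> M" "(i, j) = (p + 1, q + 1)" by (auto simp: sh_def)
  then show "1 \<le> i \<and> 1 \<le> j \<and> (i - 1, j - 1) \<in> M" by auto
next
  assume "1 \<le> i \<and> 1 \<le> j \<and> (i - 1, j - 1) \<in> M"
  then have "sh (i - 1, j - 1) = (i, j)" "(i - 1, j - 1) \<in> M" by auto
  then show "(i, j) \<in> sh ` M" by (metis image_eqI)
qed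

lemma finite_Del: "finite (Del a)"
proof -
  have "Del a \<subseteq> {0..a} \<times> {0..a}" by (auto simp: Del_def)
  then show ?thesis by (rule finite_subset) simp
qed

lemma excited_sub: "D \<in> excited (lamA a) (muA a) \<Longrightarrow> \<exists>M. Up a M \<and> D = Dm a M"
proof (induction rule: excited.induct)
  case base
  show ?case by (rule exI[of _ "{}"]) (simp add: Up_def Dm_def diagram_muA)
next
  case (move D i j)
  then obtain M where M: "Up a M" "D = Dm a M" by blast
  have MD: "M \<subseteq> Del a" using M by (simp add: Up_def)
  have L: "(i + 1, j + 1) \<in> Lam a" using move.hyps(3) by (simp add: diagram_lamA)
  have nsh: "(i, j) \<notin> sh ` M"
  proof
    assume "(i, j) \<in> sh ` M"
    then have pq: "1 \<le> i" "1 \<le> j" "(i - 1, j - 1) \<in> M" by (auto simp: sh_mem_iff)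
    then have pqD: "(i - 1, j - 1) \<in> Del a" using MD by auto
    show False
    proof (cases "(i, j - 1) \<in> Del a")
      case True
      obtain p q where pq2: "i = Suc p" "j = Suc q" using pq by (metis Suc_le_D One_nat_def)
      then have "(Suc p, q) \<in> M" using M(1) pq True unfolding Up_def by auto
      then have "(i + 1, j) \<in> sh ` M" using pq2 sh_mem_iff by auto
      then show False using move.hyps(5) M(2) by (simp add: Dm_def)
    next
      case False
      then have "i + j = a + 3" using pqD pq by (auto simp: Del_def)
      then show False using L pq by (auto simp: Lam_def)
    qed
  qed
  have ijD: "(i, j) \<in> Del a - M" using move.hyps(2) M(2) nsh by (auto simp: Dm_def)
  have c1: "(i + 1, j) \<in> M" if "(i + 1, j) \<in> Del a"
    using move.hyps(5) M(2) that by (auto simp: Dm_def)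
  have c2: "(i, j + 1) \<in> M" if "(i, j + 1) \<in> Del a"
    using move.hyps(4) M(2) that by (auto simp: Dm_def)
  have Up': "Up a (insert (i, j) M)"
    using M(1) ijD c1 c2 unfolding Up_def by auto
  have "insert (i + 1, j + 1) (D - {(i, j)}) = Dm a (insert (i, j) M)"
    using nsh unfolding M(2) Dm_def by auto
  then show ?case using Up' by blast
qed

lemma excited_sup: "Up a M \<Longrightarrow> Dm a M \<in> excited (lamA a) (muA a)"
proof (induction "card M" arbitrary: M rule: less_induct)
  case less
  have MD: "M \<subseteq> Del a" using less.prems by (simp add: Up_def)
  have finM: "finite M" using MD finite_Del finite_subset by blast
  show ?case
  proof (cases "M = {}")
    case True
    then show ?thesis using excited.base[of "muA a" "lamA a"] by (simp add: Dm_def diagram_muA)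
  next
    case False
    then obtain c0 where "c0 \<in> M" by blast
    then obtain c where c: "c \<in> M" and cmin: "\<And>c'. c' \<in> M \<Longrightarrow> fst c + snd c \<le> fst c' + snd c'"
      using ex_has_least_nat[of "\<lambda>c. c \<in> M" c0 "\<lambda>c. fst c + snd c"] by blast
    obtain i j where ij: "c = (i, j)" by fastforce
    have ijD: "(i, j) \<in> Del a" using c ij MD by auto
    define M' where "M' = M - {(i, j)}"
    have Up': "Up a M'"
    proof -
      have "(p + 1, q) \<in> M'" if "(p, q) \<in> M'" "(p + 1, q) \<in> Del a" for p q
      proof -
        have "(p + 1, q) \<in> M" using that less.prems unfolding Up_def M'_def by auto
        moreover have "(p + 1, q) \<noteq> (i, j)" using cmin[of "(p, q)"] that ij unfolding M'_def by auto
        ultimately show ?thesis unfolding M'_def by auto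
      qed
      moreover have "(p, q + 1) \<in> M'" if "(p, q) \<in> M'" "(p, q + 1) \<in> Del a" for p q
      proof -
        have "(p, q + 1) \<in> M" using that less.prems unfolding Up_def M'_def by auto
        moreover have "(p, q + 1) \<noteq> (i, j)" using cmin[of "(p, q)"] that ij unfolding M'_def by auto
        ultimately show ?thesis unfolding M'_def by auto
      qed
      ultimately show ?thesis using MD unfolding Up_def M'_def by auto
    qed
    have "card M' < card M" using c ij finM unfolding M'_def
      by (metis card_Diff1_less)
    then have exc: "Dm a M' \<in> excited (lamA a) (muA a)" using less.hyps Up' by blast
    have small: "(p, q) \<notin> M'" if "p + q < i + j" for p q
      using cmin[of "(p, q)"] that ij unfolding M'_def by auto
    have h1: "(i, j) \<in> Dm a M'" using ijD unfolding Dm_def M'_def by auto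
    have h2: "(i + 1, j + 1) \<in> diagram (lamA a)" using ijD by (auto simp: diagram_lamA Lam_def Del_def)
    have h3: "(i, j + 1) \<notin> Dm a M'"
    proof -
      have "(i, j + 1) \<notin> Del a - M'"
        using less.prems ij c unfolding Up_def M'_def by auto
      moreover have "(i, j + 1) \<notin> sh ` M'" unfolding sh_mem_iff using small[of "i - 1" j] by auto
      ultimately show ?thesis by (simp add: Dm_def)
    qed
    have h4: "(i + 1, j) \<notin> Dm a M'"
    proof -
      have "(i + 1, j) \<notin> Del a - M'"
        using less.prems ij c unfolding Up_def M'_def by auto
      moreover have "(i + 1, j) \<notin> sh ` M'" unfolding sh_mem_iff using small[of i "j - 1"] ijD
        by (auto simp: Del_def)
      ultimately show ?thesis by (simp add: Dm_def)
    qed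
    have h5: "(i + 1, j + 1) \<notin> Dm a M'"
    proof -
      have "(i + 1, j + 1) \<notin> Del a - M'"
      proof
        assume a1: "(i + 1, j + 1) \<in> Del a - M'"
        then have "(i + 1, j) \<in> Del a" using ijD by (auto simp: Del_def)
        then have "(i + 1, j) \<in> M" using less.prems ij c unfolding Up_def by auto
        then have "(i + 1, j + 1) \<in> M" using less.prems a1 unfolding Up_def by auto
        then show False using a1 unfolding M'_def by auto
      qed
      moreover have "(i + 1, j + 1) \<notin> sh ` M'" unfolding sh_mem_iff M'_def by auto
      ultimately show ?thesis by (simp add: Dm_def)
    qed
    have nsh: "(i, j) \<notin> sh ` M'" unfolding sh_mem_iff using small[of "i - 1" "j - 1"] ijD
      by (auto simp: Del_def)
    have e1: "sh ` M = insert (i + 1, j + 1) (sh ` M')" using c ij unfolding M'_def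
      by (metis insert_Diff image_insert sh_simp)
    have e2: "Del a - M' - {(i, j)} = Del a - M" unfolding M'_def using c ij by auto
    have "Dm a M' - {(i, j)} = (Del a - M) \<union> sh ` M'" using nsh e2 unfolding Dm_def by auto
    then have "insert (i + 1, j + 1) (Dm a M' - {(i, j)}) = Dm a M"
      unfolding Dm_def e1 by auto
    then show ?thesis using excited.move[OF exc h1 h2 h3 h4 h5] by simp
  qed
qed

lemma excited_eq: "excited (lamA a) (muA a) = Dm a ` {M. Up a M}"
  using excited_sub excited_sup by blast


definition Nu :: "nat \<Rightarrow> nat \<Rightarrow> (nat \<Rightarrow> nat) \<Rightarrow> (nat \<times> nat) set" where
  "Nu a i f = {(k, j). 1 \<le> j \<and> j \<le> i \<and> 1 \<le> k \<and> k + f j \<le> a + 1}"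

definition Mf :: "nat \<Rightarrow> nat \<Rightarrow> (nat \<Rightarrow> nat) \<Rightarrow> (nat \<times> nat) set" where
  "Mf a i f = Del a - Nu a i f"

lemma Up_D1: "Up a M \<Longrightarrow> (i, j) \<in> M \<Longrightarrow> (Suc i, j) \<in> Del a \<Longrightarrow> (Suc i, j) \<in> M"
  unfolding Up_def by simp
lemma Up_D2: "Up a M \<Longrightarrow> (i, j) \<in> M \<Longrightarrow> (i, Suc j) \<in> Del a \<Longrightarrow> (i, Suc j) \<in> M"
  unfolding Up_def by simp
lemma Up_sub: "Up a M \<Longrightarrow> M \<subseteq> Del a"
  unfolding Up_def by simp

lemma Fs_D:
  assumes "f \<in> Fs i a"
  shows "\<And>j. 1 \<le> j \<Longrightarrow> j \<le> i \<Longrightarrow> j \<le> f j \<and> f j \<le> a"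
    and "\<And>j. 1 \<le> j \<Longrightarrow> j < i \<Longrightarrow> f j \<le> f (Suc j)"
    and "\<And>j. \<not> (1 \<le> j \<and> j \<le> i) \<Longrightarrow> f j = undefined"
  using assms unfolding Fs_def by (auto simp: PiE_def Pi_def extensional_def)

lemma Nu_sub: "f \<in> Fs i a \<Longrightarrow> Nu a i f \<subseteq> Del a"
  using Fs_D(1) by (fastforce simp: Nu_def Del_def)

lemma Up_Mf: assumes "f \<in> Fs i a" shows "Up a (Mf a i f)"
proof -
  have "(p + 1, q) \<in> Mf a i f" if "(p, q) \<in> Mf a i f" "(p + 1, q) \<in> Del a" for p q
    using that by (auto simp: Mf_def Nu_def Del_def)
  moreover have "(p, q + 1) \<in> Mf a i f" if "(p, q) \<in> Mf a i f" "(p, q + 1) \<in> Del a" for p q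
  proof (rule ccontr)
    assume "(p, q + 1) \<notin> Mf a i f"
    then have n: "(p, q + 1) \<in> Nu a i f" using that(2) by (simp add: Mf_def)
    have "1 \<le> q" using that(1) by (auto simp: Mf_def Del_def)
    then have "f q \<le> f (Suc q)" using Fs_D(2)[OF assms, of q] n by (auto simp: Nu_def)
    then have "(p, q) \<in> Nu a i f" using n \<open>1 \<le> q\<close> by (auto simp: Nu_def)
    then show False using that(1) by (simp add: Mf_def)
  qed
  ultimately show ?thesis unfolding Up_def Mf_def by auto
qed

lemma row1_Dm:
  assumes "M \<subseteq> Del a"
  shows "{c \<in> Dm a M. fst c = 1} = {c \<in> Del a - M. fst c = 1}"
proof -
  have "c \<notin> sh ` M" if "fst c = 1" for c
  proof
    assume "c \<in> sh ` M"
    then obtain c' where "c' \<in> M" "c = sh c'" by blast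
    then have "fst c' = 0" "c' \<in> Del a" using that assms by (auto simp: sh_def)
    then show False by (auto simp: Del_def)
  qed
  then show ?thesis unfolding Dm_def by auto
qed

lemma row1_Mf:
  assumes "f \<in> Fs i a"
  shows "card {c \<in> Dm a (Mf a i f). fst c = 1} = i"
proof -
  have "Del a - Mf a i f = Nu a i f" using Nu_sub[OF assms] unfolding Mf_def by blast
  then have e: "{c \<in> Dm a (Mf a i f). fst c = 1} = {c \<in> Nu a i f. fst c = 1}"
    using row1_Dm[of "Mf a i f" a] by (simp add: Mf_def)
  have "{c \<in> Nu a i f. fst c = 1} = (\<lambda>j. (1, j)) ` {1..i}"
  proof (intro equalityI subsetI)
    fix c :: "nat \<times> nat" assume "c \<in> {c \<in> Nu a i f. fst c = 1}"
    then show "c \<in> (\<lambda>j. (1, j)) ` {1..i}" by (auto simp: Nu_def)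
  next
    fix c :: "nat \<times> nat" assume "c \<in> (\<lambda>j. (1, j)) ` {1..i}"
    then obtain j where j: "1 \<le> j" "j \<le> i" "c = (1, j)" by auto
    then show "c \<in> {c \<in> Nu a i f. fst c = 1}" using Fs_D(1)[OF assms j(1,2)] by (auto simp: Nu_def)
  qed
  then show ?thesis unfolding e by (simp add: card_image inj_on_def)
qed

lemma Dm_inj:
  assumes "Up a M1" "Up a M2" "Dm a M1 = Dm a M2"
  shows "M1 = M2"
proof -
  have key: "c \<in> M \<longleftrightarrow> c \<notin> Dm a M \<or> (1 \<le> fst c \<and> 1 \<le> snd c \<and> (fst c - 1, snd c - 1) \<in> M)"
    if "Up a M" "c \<in> Del a" for M c
  proof -
    obtain p q where c: "c = (p, q)" by fastforce
    show ?thesis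
    proof
      assume "c \<in> M"
      then show "c \<notin> Dm a M \<or> (1 \<le> fst c \<and> 1 \<le> snd c \<and> (fst c - 1, snd c - 1) \<in> M)"
        unfolding Dm_def c using sh_mem_iff[of p q M] by auto
    next
      assume h: "c \<notin> Dm a M \<or> (1 \<le> fst c \<and> 1 \<le> snd c \<and> (fst c - 1, snd c - 1) \<in> M)"
      show "c \<in> M"
      proof (cases "c \<notin> Dm a M")
        case True then show ?thesis using that(2) by (auto simp: Dm_def)
      next
        case False
        then have h2: "1 \<le> p" "1 \<le> q" "(p - 1, q - 1) \<in> M" using h c by auto
        obtain p' q' where pq: "p = Suc p'" "q = Suc q'" using h2 by (metis Suc_le_D One_nat_def)
        have "(p', q') \<in> M" using h2 pq by simp
        then have "(p', q') \<in> Del a" using Up_sub[OF that(1)] by auto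
        then have "(p, q') \<in> Del a" using that(2) c pq by (auto simp: Del_def)
        moreover have "(p', q') \<in> M" using h2 pq by simp
        ultimately have "(p, q') \<in> M" using Up_D1[OF that(1)] pq by simp
        then have "(p, Suc q') \<in> M" using Up_D2[OF that(1)] that(2) c pq by simp
        then show ?thesis using c pq by simp
      qed
    qed
  qed
  have "c \<in> M1 \<longleftrightarrow> c \<in> M2" if "c \<in> Del a" for c
    using that
  proof (induction "fst c" arbitrary: c rule: less_induct)
    case less
    show ?case
    proof (cases "1 \<le> fst c \<and> 1 \<le> snd c \<and> (fst c - 1, snd c - 1) \<in> Del a")
      case True
      then have "(fst c - 1, snd c - 1) \<in> M1 \<longleftrightarrow> (fst c - 1, snd c - 1) \<in> M2"
        using less.hyps[of "(fst c - 1, snd c - 1)"] by (auto simp: Del_def)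
      moreover note key[OF assms(1) less.prems] key[OF assms(2) less.prems]
      ultimately show ?thesis using assms(3) by blast
    next
      case False
      then have "\<not> (1 \<le> fst c \<and> 1 \<le> snd c \<and> (fst c - 1, snd c - 1) \<in> M1)"
        "\<not> (1 \<le> fst c \<and> 1 \<le> snd c \<and> (fst c - 1, snd c - 1) \<in> M2)"
        using Up_sub[OF assms(1)] Up_sub[OF assms(2)] by auto
      moreover note key[OF assms(1) less.prems] key[OF assms(2) less.prems]
      ultimately show ?thesis using assms(3) by blast
    qed
  qed
  then show ?thesis using Up_sub[OF assms(1)] Up_sub[OF assms(2)] by auto
qed


lemma downset_interval:
  assumes "S \<subseteq> {1..N}" "\<And>k k'. k \<in> S \<Longrightarrow> 1 \<le> k' \<Longrightarrow> k' \<le> k \<Longrightarrow> k' \<in> S"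
  shows "S = {1..card S}"
proof (cases "S = {}")
  case True then show ?thesis by simp
next
  case False
  have fin: "finite S" using assms(1) finite_subset by blast
  define m where "m = Max S"
  have mS: "m \<in> S" using fin False m_def by simp
  have "S = {1..m}"
  proof (intro equalityI subsetI)
    fix x assume "x \<in> S"
    then show "x \<in> {1..m}" using assms(1) fin m_def by auto
  next
    fix x assume "x \<in> {1..m}"
    then show "x \<in> S" using assms(2)[OF mS] by auto
  qed
  then show ?thesis by simp
qed

lemma Up_surj:
  assumes up: "Up a M" and cnt: "card {c \<in> Dm a M. fst c = 1} = i"
  shows "\<exists>f\<in>Fs i a. M = Mf a i f"
proof -
  define U where "U = Del a - M"
  have MD: "M \<subseteq> Del a" using Up_sub[OF up] .
  have down1: "(p, q) \<in> U" if "(Suc p, q) \<in> U" "(p, q) \<in> Del a" for p q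
    using that Up_D1[OF up, of p q] unfolding U_def by blast
  have down2: "(p, q) \<in> U" if "(p, Suc q) \<in> U" "(p, q) \<in> Del a" for p q
    using that Up_D2[OF up, of p q] unfolding U_def by blast
  have UD: "U \<subseteq> Del a" unfolding U_def by blast
  have downk: "(k', j) \<in> U" if "(k, j) \<in> U" "1 \<le> k'" "k' \<le> k" for k k' j
    using that
  proof (induction "k - k'" arbitrary: k')
    case 0 then show ?case by simp
  next
    case (Suc d)
    then have "(Suc k', j) \<in> U" by simp
    moreover have "(k', j) \<in> Del a" using Suc.prems UD by (auto simp: Del_def)
    ultimately show ?case using down1 by blast
  qed
  have downj: "(k, j') \<in> U" if "(k, j) \<in> U" "1 \<le> j'" "j' \<le> j" for k j j'
    using that
  proof (induction "j - j'" arbitrary: j')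
    case 0 then show ?case by simp
  next
    case (Suc d)
    then have "(k, Suc j') \<in> U" by simp
    moreover have "(k, j') \<in> Del a" using Suc.prems UD by (auto simp: Del_def)
    ultimately show ?case using down2 by blast
  qed
  define R where "R = {j. (1, j) \<in> U}"
  have "{c \<in> Dm a M. fst c = 1} = (\<lambda>j. (1, j)) ` R"
    unfolding row1_Dm[OF MD] R_def U_def by force
  then have "card R = i" using cnt by (simp add: card_image inj_on_def)
  moreover have "R = {1..card R}"
    by (rule downset_interval[of _ a]) (use UD downj in \<open>auto simp: R_def Del_def\<close>)
  ultimately have R: "R = {1..i}" by simp
  define C where "C j = {k. (k, j) \<in> U}" for j
  define cc where "cc j = card (C j)" for j
  have C: "C j = {1..cc j}" for j
    unfolding cc_def
    by (rule downset_interval[of _ a]) (use UD downk in \<open>auto simp: C_def Del_def\<close>)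
  define f where "f j = (if j \<in> {1..i} then a + 1 - cc j else undefined)" for j
  have cc1: "1 \<le> cc j" if "j \<in> {1..i}" for j
  proof -
    have "1 \<in> C j" using that R unfolding R_def C_def by auto
    then show ?thesis using C[of j] by auto
  qed
  have ccD: "cc j + j \<le> a + 1" if "j \<in> {1..i}" for j
  proof -
    have "cc j \<in> C j" using C[of j] cc1[OF that] by auto
    then show ?thesis using UD unfolding C_def by (auto simp: Del_def)
  qed
  have ccmono: "cc (Suc j) \<le> cc j" if "1 \<le> j" for j
  proof -
    have "C (Suc j) \<subseteq> C j" using downj that unfolding C_def by auto
    moreover have "finite (C j)" by (subst C) simp
    ultimately show ?thesis unfolding cc_def by (simp add: card_mono)
  qed
  have p1: "f \<in> {1..i} \<rightarrow>\<^sub>E {..a}"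
  proof -
    have "f j \<le> a" if "j \<in> {1..i}" for j using cc1[OF that] that by (simp add: f_def)
    then show ?thesis by (auto simp: f_def PiE_def Pi_def extensional_def)
  qed
  have p2: "\<forall>j\<in>{1..i}. j \<le> f j"
  proof
    fix j assume j: "j \<in> {1..i}"
    with ccD[OF j] show "j \<le> f j" by (simp add: f_def)
  qed
  have p3: "\<forall>j. 1 \<le> j \<longrightarrow> j < i \<longrightarrow> f j \<le> f (Suc j)"
  proof (intro allI impI)
    fix j assume j: "1 \<le> j" "j < i"
    then have "j \<in> {1..i}" "Suc j \<in> {1..i}" by auto
    then show "f j \<le> f (Suc j)" using ccmono[of j] j by (simp add: f_def)
  qed
  have fF: "f \<in> Fs i a" by (simp only: Fs_def mem_Collect_eq) (intro conjI p1 p2 p3)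
  have "U = Nu a i f"
  proof (intro equalityI subsetI)
    fix c assume cU: "c \<in> U"
    obtain k j where c: "c = (k, j)" by fastforce
    have kj: "1 \<le> k" "1 \<le> j" using cU UD c by (auto simp: Del_def)
    have "(1, j) \<in> U" using downk[of k j 1] cU c kj by simp
    then have j: "j \<in> {1..i}" using R unfolding R_def by auto
    have "k \<in> C j" using cU c unfolding C_def by simp
    then have "k \<le> cc j" using C[of j] by auto
    then show "c \<in> Nu a i f" using c kj j ccD[OF j] by (auto simp: Nu_def f_def)
  next
    fix c assume cN: "c \<in> Nu a i f"
    obtain k j where c: "c = (k, j)" by fastforce
    have j: "j \<in> {1..i}" and k: "1 \<le> k" "k + f j \<le> a + 1" using cN c by (auto simp: Nu_def)
    then have "k \<le> cc j" using ccD[OF j] by (auto simp: f_def)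
    then have "k \<in> C j" using C[of j] k by auto
    then show "c \<in> U" using c unfolding C_def by simp
  qed
  then have "M = Mf a i f" using MD unfolding Mf_def U_def by blast
  then show ?thesis using fF by blast
qed

lemma Mf_inj:
  assumes "f \<in> Fs i a" "g \<in> Fs i a" "Mf a i f = Mf a i g"
  shows "f = g"
proof -
  have "Nu a i f = Nu a i g" using assms Nu_sub unfolding Mf_def by blast
  show "f = g"
  proof
    fix j show "f j = g j"
    proof (cases "1 \<le> j \<and> j \<le> i")
      case True
      then have b: "f j \<le> a" "g j \<le> a" using Fs_D(1) assms by blast+
      have "(a + 1 - f j, j) \<in> Nu a i f" using True b by (auto simp: Nu_def)
      then have "(a + 1 - f j, j) \<in> Nu a i g" using \<open>Nu a i f = Nu a i g\<close> by simp
      then have "g j \<le> f j" using b by (auto simp: Nu_def)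
      moreover have "(a + 1 - g j, j) \<in> Nu a i g" using True b by (auto simp: Nu_def)
      then have "(a + 1 - g j, j) \<in> Nu a i f" using \<open>Nu a i f = Nu a i g\<close> by simp
      then have "f j \<le> g j" using b by (auto simp: Nu_def)
      ultimately show ?thesis by simp
    next
      case False
      then show ?thesis using Fs_D(3) assms by metis
    qed
  qed
qed

lemma excited_level:
  assumes "i \<le> a"
  shows "{D \<in> excited (lamA a) (muA a). card {c \<in> D. fst c = 1} = i}
         = (\<lambda>f. Dm a (Mf a i f)) ` Fs i a"
    and "inj_on (\<lambda>f. Dm a (Mf a i f)) (Fs i a)"
proof -
  show "{D \<in> excited (lamA a) (muA a). card {c \<in> D. fst c = 1} = i}
         = (\<lambda>f. Dm a (Mf a i f)) ` Fs i a"
  proof (intro equalityI subsetI)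
    fix D assume "D \<in> {D \<in> excited (lamA a) (muA a). card {c \<in> D. fst c = 1} = i}"
    then obtain M where M: "Up a M" "D = Dm a M" "card {c \<in> Dm a M. fst c = 1} = i"
      unfolding excited_eq by blast
    then obtain f where "f \<in> Fs i a" "M = Mf a i f" using Up_surj by blast
    then show "D \<in> (\<lambda>f. Dm a (Mf a i f)) ` Fs i a" using M by blast
  next
    fix D assume "D \<in> (\<lambda>f. Dm a (Mf a i f)) ` Fs i a"
    then obtain f where f: "f \<in> Fs i a" "D = Dm a (Mf a i f)" by blast
    then show "D \<in> {D \<in> excited (lamA a) (muA a). card {c \<in> D. fst c = 1} = i}"
      using Up_Mf[OF f(1)] row1_Mf[OF f(1)] unfolding excited_eq by blast
  qed
  show "inj_on (\<lambda>f. Dm a (Mf a i f)) (Fs i a)"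
  proof (rule inj_onI)
    fix f g assume f: "f \<in> Fs i a" and g: "g \<in> Fs i a" and e: "Dm a (Mf a i f) = Dm a (Mf a i g)"
    have "Mf a i f = Mf a i g" by (rule Dm_inj[OF Up_Mf[OF f] Up_Mf[OF g] e])
    then show "f = g" by (rule Mf_inj[OF f g])
  qed
qed


definition rr :: "nat \<Rightarrow> nat \<Rightarrow> rat" where
  "rr y k = (if k = 1 then 1 else of_nat (2 * (y + 2 - k) + 1)) / of_nat (2 * (y - k) + 1)"

lemma tele:
  "1 \<le> c \<Longrightarrow> (\<Prod>k\<in>{1..c}. rr (c + z) k) = of_nat (2 * (c + z) + 1) / ((2 * of_nat z + 1) * (2 * of_nat z + 3))"
proof (induction c arbitrary: z rule: nat_induct_at_least)
  case base
  define w where "w = 2 * of_nat z + (1::rat)"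
  have w0: "w \<noteq> 0" "w + 2 \<noteq> 0" unfolding w_def using of_nat_0_le_iff[of z, where 'a=rat] by linarith+
  have l: "(\<Prod>k\<in>{1..1}. rr (1 + z) k) = 1 / w" by (simp add: rr_def w_def)
  have r: "of_nat (2 * (1 + z) + 1) / ((2 * of_nat z + 1) * (2 * of_nat z + 3)) = (w + 2) / (w * (w + 2))"
    by (simp add: w_def algebra_simps)
  show ?case unfolding l r using w0 by simp
next
  case (Suc c)
  define w where "w = 2 * of_nat z + (1::rat)"
  have w0: "w \<noteq> 0" "w + 2 \<noteq> 0" "w + 4 \<noteq> 0" unfolding w_def using of_nat_0_le_iff[of z, where 'a=rat] by linarith+
  define Y where "Y = (of_nat (2 * (Suc c + z) + 1) :: rat)"
  have "(\<Prod>k\<in>{1..Suc c}. rr (Suc c + z) k) = (\<Prod>k\<in>{1..c}. rr (c + Suc z) k) * rr (Suc c + z) (Suc c)"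
    by (simp add: prod.nat_ivl_Suc' Suc.hyps)
  also have "\<dots> = Y / ((w + 2) * (w + 4)) * rr (Suc c + z) (Suc c)"
  proof -
    have ih: "(\<Prod>k\<in>{1..c}. rr (c + Suc z) k) = of_nat (2 * (c + Suc z) + 1) /
        ((2 * of_nat (Suc z) + 1) * (2 * of_nat (Suc z) + 3))" by (rule Suc.IH)
    have e1: "(of_nat (2 * (c + Suc z) + 1) :: rat) = Y" unfolding Y_def by simp
    have e2: "(2 * of_nat (Suc z) + 1 :: rat) = w + 2" "(2 * of_nat (Suc z) + 3 :: rat) = w + 4"
      unfolding w_def by simp_all
    show ?thesis unfolding ih e1 e2 ..
  qed
  also have "rr (Suc c + z) (Suc c) = (w + 4) / w"
    using Suc.hyps by (simp add: rr_def w_def algebra_simps)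
  also have "Y / ((w + 2) * (w + 4)) * ((w + 4) / w) = (Y * (w + 4)) / ((w * (w + 2)) * (w + 4))"
    by (simp add: times_divide_times_eq ac_simps)
  also have "\<dots> = Y / (w * (w + 2))"
    by (rule nonzero_mult_divide_mult_cancel_right[OF w0(3)])
  also have "\<dots> = of_nat (2 * (Suc c + z) + 1) / ((2 * of_nat z + 1) * (2 * of_nat z + 3))"
    by (simp add: Y_def w_def algebra_simps)
  finally show ?case .
qed

definition hk :: "nat \<Rightarrow> nat \<times> nat \<Rightarrow> rat" where
  "hk a c = of_nat (hook (lamA a) c)"

definition rcol :: "nat \<Rightarrow> nat \<times> nat \<Rightarrow> rat" where
  "rcol a c = (if fst c = 1 then 1 else hk a c) / hk a (sh c)"

lemma wt_split:
  assumes up: "Up a M"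
  shows "(\<Prod>c\<in>{c \<in> Dm a M. fst c \<noteq> 1}. hook (lamA a) c)
       = (\<Prod>c\<in>{c \<in> Del a - M. fst c \<noteq> 1}. hook (lamA a) c) * (\<Prod>c\<in>M. hook (lamA a) (sh c))"
proof -
  have MD: "M \<subseteq> Del a" using Up_sub[OF up] .
  have finM: "finite M" using MD finite_Del finite_subset by blast
  have shfst: "fst (sh c) \<noteq> 1" if "c \<in> M" for c
    using that MD by (auto simp: sh_def Del_def)
  have eq: "{c \<in> Dm a M. fst c \<noteq> 1} = {c \<in> Del a - M. fst c \<noteq> 1} \<union> sh ` M"
    unfolding Dm_def using shfst by (auto; blast)
  have disj: "{c \<in> Del a - M. fst c \<noteq> 1} \<inter> sh ` M = {}"
  proof (rule ccontr)
    assume "{c \<in> Del a - M. fst c \<noteq> 1} \<inter> sh ` M \<noteq> {}"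
    then obtain c where c: "c \<in> M" "sh c \<in> Del a" "sh c \<notin> M" by auto
    obtain p q where pq: "c = (p, q)" by fastforce
    have "(Suc p, q) \<in> Del a" using c(2) pq MD c(1) by (auto simp: Del_def)
    then have "(Suc p, q) \<in> M" using Up_D1[OF up] c(1) pq by simp
    then have "(Suc p, Suc q) \<in> M" using Up_D2[OF up] c(2) pq by simp
    then show False using c(3) pq by simp
  qed
  have inj: "inj_on sh M" by (auto simp: inj_on_def sh_def prod_eq_iff)
  have fin1: "finite {c \<in> Del a - M. fst c \<noteq> 1}" using finite_Del by simp
  show ?thesis unfolding eq
    by (subst prod.union_disjoint[OF fin1 _ disj]) (simp_all add: finM prod.reindex[OF inj])
qed

lemma hk_pos:
  assumes "c \<in> Del a"
  shows "hk a (sh c) > 0"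
proof -
  obtain p q where "c = (p, q)" by fastforce
  then show ?thesis using assms hook_lamA[of "Suc p" "Suc q" a] by (auto simp: hk_def Del_def)
qed

lemma col_prod:
  assumes f: "f \<in> Fs i a" and j: "1 \<le> j" "j \<le> i"
  shows "(\<Prod>k\<in>{1..a + 1 - f j}. rcol a (k, j)) = of_nat (2 * (a + 1 - j) + 1) * gg (f j - j)"
proof -
  have b: "j \<le> f j" "f j \<le> a" using Fs_D(1)[OF f j] by auto
  have "rcol a (k, j) = rr (a + 1 - j) k" if k: "k \<in> {1..a + 1 - f j}" for k
  proof -
    have k': "1 \<le> k" "k + j \<le> a + 1" using k b by auto
    have h2: "hk a (sh (k, j)) = of_nat (2 * (a + 1 - j - k) + 1)"
      using hook_lamA[of "Suc k" "Suc j" a] k' by (simp add: hk_def)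
    have h1: "hk a (k, j) = of_nat (2 * (a + 1 - j + 2 - k) + 1)" if "k \<noteq> 1"
      using hook_lamA[of k j a] k' that j by (simp add: hk_def)
    show ?thesis unfolding rcol_def rr_def using h1 h2 by simp
  qed
  then have "(\<Prod>k\<in>{1..a + 1 - f j}. rcol a (k, j)) = (\<Prod>k\<in>{1..a + 1 - f j}. rr ((a + 1 - f j) + (f j - j)) k)"
    using b by (intro prod.cong) auto
  also have "\<dots> = of_nat (2 * ((a + 1 - f j) + (f j - j)) + 1) /
      ((2 * of_nat (f j - j) + 1) * (2 * of_nat (f j - j) + 3))"
    using b by (intro tele) auto
  also have "\<dots> = of_nat (2 * (a + 1 - j) + 1) * gg (f j - j)"
    using b by (simp add: gg_def)
  finally show ?thesis .
qed

lemma Nu_prod: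
  assumes f: "f \<in> Fs i a"
  shows "(\<Prod>c\<in>Nu a i f. g c) = (\<Prod>j\<in>{1..i}. \<Prod>k\<in>{1..a + 1 - f j}. g (k, j))"
proof -
  have e: "Nu a i f = (\<lambda>(j, k). (k, j)) ` (SIGMA j:{1..i}. {1..a + 1 - f j})"
  proof (intro equalityI subsetI)
    fix c assume c: "c \<in> Nu a i f"
    obtain k j where kj: "c = (k, j)" by fastforce
    then have "(j, k) \<in> (SIGMA j:{1..i}. {1..a + 1 - f j})" using c by (auto simp: Nu_def)
    then show "c \<in> (\<lambda>(j, k). (k, j)) ` (SIGMA j:{1..i}. {1..a + 1 - f j})" using kj by force
  next
    fix c assume "c \<in> (\<lambda>(j, k). (k, j)) ` (SIGMA j:{1..i}. {1..a + 1 - f j})"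
    then obtain j k where "c = (k, j)" "j \<in> {1..i}" "k \<in> {1..a + 1 - f j}" by auto
    then show "c \<in> Nu a i f" using Fs_D(1)[OF f, of j] by (auto simp: Nu_def)
  qed
  have inj: "inj_on (\<lambda>(j, k). (k, j)) (SIGMA j:{1..i}. {1..a + 1 - f j})"
    by (auto simp: inj_on_def)
  show ?thesis unfolding e prod.reindex[OF inj]
    by (subst prod.Sigma) (auto simp: comp_def case_prod_beta)
qed


lemma Bq_as_prod: "i \<le> a \<Longrightarrow> (\<Prod>j\<in>{1..i}. rat_of_nat (2 * (a + 1 - j) + 1)) = Bq i (of_nat a)"
proof (induction i)
  case 0 then show ?case by simp
next
  case (Suc i)
  have "(\<Prod>j\<in>{1..Suc i}. rat_of_nat (2 * (a + 1 - j) + 1))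
      = (\<Prod>j\<in>{1..i}. rat_of_nat (2 * (a + 1 - j) + 1)) * rat_of_nat (2 * (a + 1 - Suc i) + 1)"
    by (simp add: prod.nat_ivl_Suc')
  also have "\<dots> = Bq i (of_nat a) * (2 * of_nat a - 2 * of_nat i + 1)"
    using Suc by (simp add: of_nat_diff)
  finally show ?case by (simp add: Bq_Suc)
qed

definition W0 :: "nat \<Rightarrow> rat" where
  "W0 a = (\<Prod>c\<in>Del a. hk a (sh c))"

lemma W0_pos: "W0 a > 0"
  unfolding W0_def by (rule prod_pos) (use hk_pos in blast)

lemma wt_f:
  assumes f: "f \<in> Fs i a" and ia: "i \<le> a"
  shows "rat_of_nat (\<Prod>c\<in>{c \<in> Dm a (Mf a i f). fst c \<noteq> 1}. hook (lamA a) c)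
       = W0 a * (Bq i (of_nat a) * (\<Prod>j\<in>{1..i}. gg (f j - j)))"
proof -
  let ?N = "Nu a i f"
  have ND: "?N \<subseteq> Del a" using Nu_sub[OF f] .
  have finN: "finite ?N" using ND finite_Del finite_subset by blast
  have e1: "Del a - Mf a i f = ?N" using ND unfolding Mf_def by blast
  have e2: "Mf a i f = Del a - ?N" unfolding Mf_def ..
  have "rat_of_nat (\<Prod>c\<in>{c \<in> Dm a (Mf a i f). fst c \<noteq> 1}. hook (lamA a) c)
      = (\<Prod>c\<in>{c \<in> ?N. fst c \<noteq> 1}. hk a c) * (\<Prod>c\<in>Del a - ?N. hk a (sh c))"
  proof -
    have "(\<Prod>c\<in>{c \<in> Dm a (Mf a i f). fst c \<noteq> 1}. hook (lamA a) c)
      = (\<Prod>c\<in>{c \<in> Del a - Mf a i f. fst c \<noteq> 1}. hook (lamA a) c) * (\<Prod>c\<in>Mf a i f. hook (lamA a) (sh c))"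
      by (rule wt_split[OF Up_Mf[OF f]])
    also have "\<dots> = (\<Prod>c\<in>{c \<in> ?N. fst c \<noteq> 1}. hook (lamA a) c) * (\<Prod>c\<in>Del a - ?N. hook (lamA a) (sh c))"
      by (simp only: e1, simp only: e2)
    finally show ?thesis by (simp add: hk_def of_nat_prod)
  qed
  moreover have "W0 a = (\<Prod>c\<in>Del a - ?N. hk a (sh c)) * (\<Prod>c\<in>?N. hk a (sh c))"
    unfolding W0_def by (rule prod.subset_diff[OF ND finite_Del])
  moreover have "(\<Prod>c\<in>?N. rcol a c) = (\<Prod>c\<in>{c \<in> ?N. fst c \<noteq> 1}. hk a c) / (\<Prod>c\<in>?N. hk a (sh c))"
  proof -
    have "(\<Prod>c\<in>?N. rcol a c) = (\<Prod>c\<in>?N. if fst c = 1 then 1 else hk a c) / (\<Prod>c\<in>?N. hk a (sh c))"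
      unfolding rcol_def by (rule prod_dividef)
    also have "(\<Prod>c\<in>?N. if fst c = 1 then 1 else hk a c) = (\<Prod>c\<in>{c \<in> ?N. fst c \<noteq> 1}. hk a c)"
      by (subst prod.inter_filter[OF finN]) (rule prod.cong, auto)
    finally show ?thesis .
  qed
  moreover have "(\<Prod>c\<in>?N. hk a (sh c)) \<noteq> 0"
    using hk_pos ND by (metis (no_types, lifting) less_irrefl prod_zero_iff finN subsetD)
  moreover have "(\<Prod>c\<in>?N. rcol a c) = Bq i (of_nat a) * (\<Prod>j\<in>{1..i}. gg (f j - j))"
  proof -
    have "(\<Prod>c\<in>?N. rcol a c) = (\<Prod>j\<in>{1..i}. \<Prod>k\<in>{1..a + 1 - f j}. rcol a (k, j))"
      by (rule Nu_prod[OF f])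
    also have "\<dots> = (\<Prod>j\<in>{1..i}. of_nat (2 * (a + 1 - j) + 1) * gg (f j - j))"
      by (rule prod.cong[OF refl]) (use col_prod[OF f] in auto)
    also have "\<dots> = Bq i (of_nat a) * (\<Prod>j\<in>{1..i}. gg (f j - j))"
      unfolding prod.distrib Bq_as_prod[OF ia] ..
    finally show ?thesis .
  qed
  ultimately show ?thesis by (simp add: field_simps)
qed

lemma comb_main:
  assumes ia: "i \<le> a"
  shows "rat_of_nat (NN_coeff (a - i) (Iodd a)) = W0 a * (Bq i (of_nat a) * Sf i a)"
proof -
  have si: "sI (Iodd a) - (a - i) = i" using ia sI_Iodd by simp
  have "NN_coeff (a - i) (Iodd a) = (\<Sum>D\<in>(\<lambda>f. Dm a (Mf a i f)) ` Fs i a.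
      \<Prod>c\<in>{c \<in> D. fst c \<noteq> 1}. hook (lamA a) c)"
    unfolding NN_coeff_def lamI_Iodd muI_Iodd si excited_level(1)[OF ia] ..
  also have "\<dots> = (\<Sum>f\<in>Fs i a. \<Prod>c\<in>{c \<in> Dm a (Mf a i f). fst c \<noteq> 1}. hook (lamA a) c)"
    by (rule sum.reindex[OF excited_level(2)[OF ia], unfolded comp_def])
  finally have "rat_of_nat (NN_coeff (a - i) (Iodd a))
      = (\<Sum>f\<in>Fs i a. rat_of_nat (\<Prod>c\<in>{c \<in> Dm a (Mf a i f). fst c \<noteq> 1}. hook (lamA a) c))"
    by (simp add: of_nat_sum)
  also have "\<dots> = (\<Sum>f\<in>Fs i a. W0 a * (Bq i (of_nat a) * (\<Prod>j\<in>{1..i}. gg (f j - j))))"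
    by (rule sum.cong[OF refl]) (rule wt_f[OF _ ia])
  also have "\<dots> = W0 a * (Bq i (of_nat a) * Sf i a)"
    by (simp add: Sf_def sum_distrib_left)
  finally show ?thesis .
qed

lemma comb: "i \<le> a \<Longrightarrow> NN_coeff a (Iodd a) \<noteq> 0 \<and>
   (of_nat (NN_coeff (a - i) (Iodd a)) :: rat) = of_nat (NN_coeff a (Iodd a)) * (Bq i (of_nat a) * Sf i a)"
proof -
  assume ia: "i \<le> a"
  have "rat_of_nat (NN_coeff (a - 0) (Iodd a)) = W0 a * (Bq 0 (of_nat a) * Sf 0 a)"
    by (rule comb_main) simp
  then have n0: "rat_of_nat (NN_coeff a (Iodd a)) = W0 a" by simp
  then have "NN_coeff a (Iodd a) \<noteq> 0" using W0_pos[of a] by auto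
  then show ?thesis using comb_main[OF ia] n0 by simp
qed


definition Bp :: "nat \<Rightarrow> rat poly" where
  "Bp k = (\<Prod>j<k. [:1 - 2 * of_nat j, 2:])"

lemma poly_Bp: "poly (Bp k) x = Bq k x"
  unfolding Bp_def Bq_def poly_prod by (intro prod.cong) (auto simp: algebra_simps)

lemma degree_Bp: "degree (Bp k) \<le> k"
proof -
  have "degree (Bp k) \<le> (\<Sum>j<k. degree [:1 - 2 * of_nat j, 2::rat:])"
    unfolding Bp_def using degree_prod_sum_le[of "{..<k}" "\<lambda>j. [:1 - 2 * of_nat j, 2::rat:]"]
    by (simp add: comp_def)
  also have "\<dots> = k" by simp
  finally show ?thesis .
qed

theorem theorem7p4:
  fixes i :: nat
  shows "\<exists>!P :: rat poly. degree P \<le> i \<and>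
           (\<forall>a :: nat. i \<le> a \<longrightarrow>
              poly P (of_nat a) = of_nat (NN_coeff (a - i) (Iodd a)) / of_nat (NN_coeff a (Iodd a)))"
proof -
  obtain q where q: "\<And>a. i = 0 \<or> i \<le> Suc a \<Longrightarrow>
      Bq i (of_nat a) * Sf i a = (\<Sum>k\<le>i. q k * Bq k (of_nat a))"
    using T_exists[of i] by blast
  define P where "P = (\<Sum>k\<le>i. smult (q k) (Bp k))"
  have degP: "degree P \<le> i"
    unfolding P_def
  proof (rule degree_sum_le)
    fix k assume "k \<in> {..i}"
    then show "degree (smult (q k) (Bp k)) \<le> i"
      using degree_Bp[of k] degree_smult_le[of "q k" "Bp k"] by simp
  qed simp
  have valP: "poly P (of_nat a) = of_nat (NN_coeff (a - i) (Iodd a)) / of_nat (NN_coeff a (Iodd a))"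
    if "i \<le> a" for a
  proof -
    have "poly P (of_nat a) = Bq i (of_nat a) * Sf i a"
      using q[of a] that by (simp add: P_def poly_sum poly_Bp)
    then show ?thesis using comb[OF that] by simp
  qed
  show ?thesis
  proof (rule ex1I[of _ P])
    show "degree P \<le> i \<and> (\<forall>a. i \<le> a \<longrightarrow> poly P (of_nat a) =
        of_nat (NN_coeff (a - i) (Iodd a)) / of_nat (NN_coeff a (Iodd a)))"
      using degP valP by blast
  next
    fix P' :: "rat poly" assume P': "degree P' \<le> i \<and> (\<forall>a. i \<le> a \<longrightarrow> poly P' (of_nat a) =
        of_nat (NN_coeff (a - i) (Iodd a)) / of_nat (NN_coeff a (Iodd a)))"
    show "P' = P"
    proof (rule ccontr)
      assume "P' \<noteq> P"
      then have nz: "P' - P \<noteq> 0" by simp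
      have "of_nat ` {i..} \<subseteq> {x. poly (P' - P) x = 0}"
        using P' valP by auto
      moreover have "infinite (of_nat ` {i..} :: rat set)"
      proof
        assume "finite (of_nat ` {i..} :: rat set)"
        then have "finite {i..}" by (rule finite_imageD) (simp add: inj_on_def)
        then show False using infinite_Ici by blast
      qed
      ultimately show False using poly_roots_finite[OF nz] finite_subset by blast
    qed
  qed
qed

end
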